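(* Let $\gamma\in\{0,1\}^p$, let $\psi>0$, and let the prior on $\beta_\gamma$ be $\mathcal{N}_{|\gamma|_0}(0,s^2I)$ with $s>0$. Assume $X_\gamma$ has full column rank. Define $m_n(\beta_\gamma)=-nQ_n(y,X_\gamma;\beta_\gamma,\psi)-\log\pi(\beta_\gamma)$. (i) If the mean and variance functions satisfy, for every $i=1,\dots,n$ and every $\beta_\gamma\in\mathbb{R}^{|\gamma|_0}$, $$\frac{V'(\mu(x_{i\gamma}^\top\beta_\gamma))}{V(\mu(x_{i\gamma}^\top\beta_\gamma))}\big(\mu'(x_{i\gamma}^\top\beta_\gamma)\big)^2-\mu''(x_{i\gamma}^\top\beta_\gamma)=0,$$ then $m_n$ is convex in $\beta_\gamma$. (ii) Suppose $\mathbb{E}_{F_0}[y_i\mid x_i]=\mu(x_i^\top\beta^\ast)$ for all $i$, for some $\beta^\ast\in\mathbb{R}^p$, and let $\gamma^\ast_j=\mathbb{I}(\beta^\ast_j\ne0)$. If $\gamma^\ast\subseteq\gamma$, then $$\mathbb{E}_{F_0}\big[\nabla^2_{\beta_\gamma}m_n(\beta^\ast_\gamma)\big]=\frac1\psi X_\gamma^\top D^\ast X_\gamma+\frac1{s^2}I,$$ which is positive definite, where $D^\ast=\mathrm{diag}(d_1^\ast,\dots,d_n^\ast)$ with $d_i^\ast=\frac{\mu'(x_{i\gamma}^\top\beta^\ast_\gamma)^2}{V(\mu(x_{i\gamma}^\top\beta^\ast_\gamma))}$, and $\beta^\ast_\gamma$ is the subvector of $\beta^\ast$ indexed by $\ga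mma$.
   Context: $y_i\in\mathcal{Y}\subseteq\mathbb{R}$, $x_i\in\mathbb{R}^p$, $X\in\mathbb{R}^{n\times p}$ with rows $x_i^\top$. A model is $\gamma\in\{0,1\}^p$, $|\gamma|_0=\sum_j\gamma_j$, and $\beta_\gamma,X_\gamma,x_{i\gamma}$ are the restrictions to coordinates with $\gamma_j=1$; $\gamma^\ast\subseteq\gamma$ means $\gamma^\ast_j=1\Rightarrow\gamma_j=1$. The inverse link $\mu:\mathbb{R}\to\mathcal{Y}$ is twice differentiable and the variance function $V:\mathcal{Y}\to(0,\infty)$ is differentiable. The quasi-log-likelihood is $\ell_\psi(y_i;x_i,\beta)=\int_a^{\mu(x_i^\top\beta)}\frac{y_i-t}{\psi V(t)}dt$ for a fixed $a\in\mathcal{Y}$, and $Q_n(y,X_\gamma;\beta_\gamma,\psi)=\frac1n\sum_{i=1}^n\ell_\psi(y_i;x_{i\gamma},\beta_\gamma)$. *)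

theory Defs
  imports "HOL-Probability.Probability"
begin

text \<open>Coordinates j of the p-dimensional covariate space are the elements of a finite
  type 'p; a model gamma in {0,1}^p is a set of coordinates. A vector beta_gamma in
  R^{|gamma|} is represented by a vector of real^'p supported on gamma.\<close>

definition model_space :: "'p::finite set \<Rightarrow> (real^'p) set" where
  "model_space \<gamma> = {b. \<forall>j. j \<notin> \<gamma> \<longrightarrow> b $ j = 0}"

definition lin_pred :: "real^'p::finite \<Rightarrow> 'p set \<Rightarrow> real^'p \<Rightarrow> real" where
  "lin_pred xi \<gamma> b = (\<Sum>j\<in>\<gamma>. xi $ j * b $ j)"

definition restr :: "'p::finite set \<Rightarrow> real^'p \<Rightarrow> real^'p" where
  "restr \<gamma> b = (\<chi> j. if j \<in> \<gamma> then b $ j else 0)"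

definition oint :: "(real \<Rightarrow> real) \<Rightarrow> real \<Rightarrow> real \<Rightarrow> real" where
  "oint f a b = (if a \<le> b then integral {a..b} f else - integral {b..a} f)"

definition qll :: "(real \<Rightarrow> real) \<Rightarrow> (real \<Rightarrow> real) \<Rightarrow> real \<Rightarrow> real \<Rightarrow> real \<Rightarrow> real \<Rightarrow> real" where
  "qll \<mu> V a \<psi> yi \<eta> = oint (\<lambda>t. (yi - t) / (\<psi> * V t)) a (\<mu> \<eta>)"

definition Qn :: "(real \<Rightarrow> real) \<Rightarrow> (real \<Rightarrow> real) \<Rightarrow> real \<Rightarrow> real \<Rightarrow> nat \<Rightarrow> (nat \<Rightarrow> real)
    \<Rightarrow> (nat \<Rightarrow> real^'p::finite) \<Rightarrow> 'p set \<Rightarrow> real^'p \<Rightarrow> real" where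
  "Qn \<mu> V a \<psi> n y x \<gamma> b = (1 / real n) * (\<Sum>i<n. qll \<mu> V a \<psi> (y i) (lin_pred (x i) \<gamma> b))"

definition gauss_prior :: "real \<Rightarrow> 'p::finite set \<Rightarrow> real^'p \<Rightarrow> real" where
  "gauss_prior s \<gamma> b =
     (2 * pi * s\<^sup>2) powr (- real (card \<gamma>) / 2) * exp (- (\<Sum>j\<in>\<gamma>. (b $ j)\<^sup>2) / (2 * s\<^sup>2))"

definition mn :: "(real \<Rightarrow> real) \<Rightarrow> (real \<Rightarrow> real) \<Rightarrow> real \<Rightarrow> real \<Rightarrow> real \<Rightarrow> nat \<Rightarrow> (nat \<Rightarrow> real)
    \<Rightarrow> (nat \<Rightarrow> real^'p::finite) \<Rightarrow> 'p set \<Rightarrow> real^'p \<Rightarrow> real" where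
  "mn \<mu> V a \<psi> s n y x \<gamma> b = - real n * Qn \<mu> V a \<psi> n y x \<gamma> b - ln (gauss_prior s \<gamma> b)"

definition partial_deriv :: "(real^'p::finite \<Rightarrow> real) \<Rightarrow> 'p \<Rightarrow> real^'p \<Rightarrow> real" where
  "partial_deriv f k b = deriv (\<lambda>t. f (b + t *\<^sub>R axis k 1)) 0"

definition hessian_entry :: "(real^'p::finite \<Rightarrow> real) \<Rightarrow> 'p \<Rightarrow> 'p \<Rightarrow> real^'p \<Rightarrow> real" where
  "hessian_entry f j k b = partial_deriv (\<lambda>c. partial_deriv f k c) j b"

definition full_col_rank :: "nat \<Rightarrow> (nat \<Rightarrow> real^'p::finite) \<Rightarrow> 'p set \<Rightarrow> bool" where
  "full_col_rank n x \<gamma> \<longleftrightarrow>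
     (\<forall>c::'p \<Rightarrow> real. (\<forall>i<n. (\<Sum>j\<in>\<gamma>. x i $ j * c j) = 0) \<longrightarrow> (\<forall>j\<in>\<gamma>. c j = 0))"

definition pos_def_on :: "'p set \<Rightarrow> ('p \<Rightarrow> 'p \<Rightarrow> real) \<Rightarrow> bool" where
  "pos_def_on \<gamma> A \<longleftrightarrow>
     (\<forall>c::'p \<Rightarrow> real. (\<exists>j\<in>\<gamma>. c j \<noteq> 0) \<longrightarrow> (\<Sum>j\<in>\<gamma>. \<Sum>k\<in>\<gamma>. c j * A j k * c k) > 0)"

end

theory Submission
  imports Defs
begin

lemma oint_eq_G:
  fixes f :: "real \<Rightarrow> real"
  assumes cont: "continuous_on {c..d} f" and a: "a \<in> {c..d}" and v: "v \<in> {c..d}"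
  shows "oint f a v = integral {c..v} f - integral {c..a} f"
proof (cases "a \<le> v")
  case True
  have ih: "f integrable_on {c..v}"
    by (rule integrable_continuous_real) (rule continuous_on_subset[OF cont], use v in auto)
  have "integral {c..a} f + integral {a..v} f = integral {c..v} f"
    using Henstock_Kurzweil_Integration.integral_combine[of c a v f] ih a True by auto
  then show ?thesis using True by (simp add: oint_def)
next
  case False
  have ih: "f integrable_on {c..a}"
    by (rule integrable_continuous_real) (rule continuous_on_subset[OF cont], use a in auto)
  have "integral {c..v} f + integral {v..a} f = integral {c..a} f"
    using Henstock_Kurzweil_Integration.integral_combine[of c v a f] ih v False by auto
  then show ?thesis using False by (simp add: oint_def)
qed

lemma oint_deriv:
  fixes f :: "real \<Rightarrow> real"
  assumes Y: "is_interval Y" and aY: "a \<in> Y" and uY: "u \<in> Y" and cont: "continuous_on Y f"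
  shows "((\<lambda>v. oint f a v) has_real_derivative f u) (at u within Y)"
proof -
  define c0 where "c0 = (if \<exists>y\<in>Y. y<u then SOME y. y\<in>Y \<and> y<u else u)"
  define d0 where "d0 = (if \<exists>y\<in>Y. y>u then SOME y. y\<in>Y \<and> y>u else u)"
  have c0: "c0 \<in> Y" "c0 \<le> u" "(\<exists>y\<in>Y. y<u) \<Longrightarrow> c0 < u"
    unfolding c0_def using uY by (auto intro: someI2_ex)
  have d0: "d0 \<in> Y" "d0 \<ge> u" "(\<exists>y\<in>Y. y>u) \<Longrightarrow> d0 > u"
    unfolding d0_def using uY by (auto intro: someI2_ex)
  define c where "c = min a c0"
  define d where "d = max a d0"
  have cY: "c \<in> Y" and dY: "d \<in> Y" using c0 d0 aY by (auto simp: c_def d_def min_def max_def)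
  have KY: "{c..d} \<subseteq> Y"
  proof
    fix t assume "t \<in> {c..d}"
    then show "t \<in> Y" using Y cY dY unfolding is_interval_1 by (meson atLeastAtMost_iff)
  qed
  have aK: "a \<in> {c..d}" and uK: "u \<in> {c..d}" using c0 d0 by (auto simp: c_def d_def)
  have contK: "continuous_on {c..d} f" using continuous_on_subset[OF cont KY] .
  have D1: "((\<lambda>v. integral {c..v} f - integral {c..a} f) has_real_derivative f u) (at u within {c..d})"
    using integral_has_real_derivative[OF contK uK] by (auto intro!: derivative_eq_intros)
  have D2: "((\<lambda>v. oint f a v) has_real_derivative f u) (at u within {c..d})"
    by (rule has_field_derivative_transform_within[OF D1 zero_less_one uK])
       (simp add: oint_eq_G[OF contK aK])
  define r where "r = min 1 (min (if c0<u then u-c0 else 1) (if d0>u then d0-u else 1))"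
  have r: "r > 0" using c0 d0 by (auto simp: r_def)
  have "at u within Y = at u within {c..d}"
  proof (rule at_within_nhd[of u "ball u r"])
    show "u \<in> ball u r" using r by simp
    show "open (ball u r)" by simp
    show "Y \<inter> ball u r - {u} = {c..d} \<inter> ball u r - {u}"
    proof
      show "{c..d} \<inter> ball u r - {u} \<subseteq> Y \<inter> ball u r - {u}" using KY by auto
      show "Y \<inter> ball u r - {u} \<subseteq> {c..d} \<inter> ball u r - {u}"
      proof
        fix y assume y: "y \<in> Y \<inter> ball u r - {u}"
        hence yY: "y \<in> Y" and dy: "\<bar>y - u\<bar> < r" and ne: "y \<noteq> u" by (auto simp: dist_real_def)
        show "y \<in> {c..d} \<inter> ball u r - {u}"
        proof (cases "y < u")
          case True
          hence "c0 < u" using c0(3) yY by blast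
          hence "r \<le> u - c0" by (auto simp: r_def)
          thus ?thesis using y True dy c0 uK by (auto simp: c_def)
        next
          case False
          hence "y > u" using ne by auto
          hence "d0 > u" using d0(3) yY by blast
          hence "r \<le> d0 - u" by (auto simp: r_def)
          thus ?thesis using y False dy d0 uK by (auto simp: d_def)
        qed
      qed
    qed
  qed
  thus ?thesis using D2 by simp
qed


lemma lin_pred_line:
  fixes xi b :: "real^'p::finite"
  assumes k: "k \<in> \<gamma>"
  shows "lin_pred xi \<gamma> (b + t *\<^sub>R axis k 1) = lin_pred xi \<gamma> b + t * xi $ k"
proof -
  have "lin_pred xi \<gamma> (b + t *\<^sub>R axis k 1) = (\<Sum>j\<in>\<gamma>. xi $ j * b $ j + (if j = k then t * xi $ k else 0))"
    unfolding lin_pred_def by (rule sum.cong) (auto simp: axis_def algebra_simps)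
  also have "\<dots> = lin_pred xi \<gamma> b + t * xi $ k"
    using k by (simp add: sum.distrib lin_pred_def)
  finally show ?thesis .
qed

lemma vec_line: "axis k (1::real) $ j = (if j = k then 1 else 0)"
  by (simp add: axis_def)

locale qsetup =
  fixes \<mu> \<mu>' \<mu>'' V V' :: "real \<Rightarrow> real"
    and Y :: "real set" and a \<psi> s :: real
  assumes Y_interval: "is_interval Y" and a_in: "a \<in> Y"
    and mu_range: "\<And>\<eta>. \<mu> \<eta> \<in> Y"
    and mu_d1: "\<And>\<eta>. (\<mu> has_real_derivative \<mu>' \<eta>) (at \<eta>)"
    and mu_d2: "\<And>\<eta>. (\<mu>' has_real_derivative \<mu>'' \<eta>) (at \<eta>)"
    and V_pos: "\<And>t. t \<in> Y \<Longrightarrow> V t > 0"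
    and V_d: "\<And>t. t \<in> Y \<Longrightarrow> (V has_real_derivative V' t) (at t within Y)"
    and psi_pos: "\<psi> > 0" and s_pos: "s > 0"
begin

definition w :: "real \<Rightarrow> real" where
  "w \<eta> = \<mu>' \<eta> / (\<psi> * V (\<mu> \<eta>))"

definition w' :: "real \<Rightarrow> real" where
  "w' \<eta> = (\<mu>'' \<eta> * (\<psi> * V (\<mu> \<eta>)) - \<mu>' \<eta> * (\<psi> * (V' (\<mu> \<eta>) * \<mu>' \<eta>))) / (\<psi> * V (\<mu> \<eta>))\<^sup>2"

definition L1 :: "real \<Rightarrow> real \<Rightarrow> real" where
  "L1 y \<eta> = (y - \<mu> \<eta>) * w \<eta>"

definition L2 :: "real \<Rightarrow> real \<Rightarrow> real" where
  "L2 y \<eta> = - \<mu>' \<eta> * w \<eta> + (y - \<mu> \<eta>) * w' \<eta>"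

lemma V_cont: "continuous_on Y V"
  using V_d by (meson DERIV_continuous continuous_on_eq_continuous_within)

lemma Vmu_pos: "V (\<mu> \<eta>) > 0"
  using V_pos mu_range by blast

lemma Vmu_d: "((\<lambda>\<eta>. V (\<mu> \<eta>)) has_real_derivative V' (\<mu> \<eta>) * \<mu>' \<eta>) (at \<eta>)"
proof -
  have "(V has_real_derivative V' (\<mu> \<eta>)) (at (\<mu> \<eta>) within (\<mu> ` UNIV))"
    by (rule has_field_derivative_subset[OF V_d[OF mu_range]]) (use mu_range in auto)
  from DERIV_image_chain[OF this mu_d1] show ?thesis by (simp add: o_def)
qed

lemma qll_d1: "(qll \<mu> V a \<psi> y has_real_derivative L1 y \<eta>) (at \<eta>)"
proof -
  let ?f = "\<lambda>t. (y - t) / (\<psi> * V t)"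
  have cf: "continuous_on Y ?f"
    using V_cont psi_pos by (auto intro!: continuous_intros dest: V_pos)
  have "(oint ?f a has_real_derivative ?f (\<mu> \<eta>)) (at (\<mu> \<eta>) within (\<mu> ` UNIV))"
    by (rule has_field_derivative_subset[OF oint_deriv[OF Y_interval a_in mu_range cf]])
       (use mu_range in auto)
  from DERIV_image_chain[OF this mu_d1] show ?thesis
    by (simp add: o_def qll_def[abs_def] L1_def w_def)
qed

lemma w_d: "(w has_real_derivative w' \<eta>) (at \<eta>)"
proof -
  have d: "((\<lambda>\<eta>. \<mu>' \<eta> / (\<psi> * V (\<mu> \<eta>))) has_real_derivative
     (\<mu>'' \<eta> * (\<psi> * V (\<mu> \<eta>)) - \<mu>' \<eta> * (\<psi> * (V' (\<mu> \<eta>) * \<mu>' \<eta>))) / ((\<psi> * V (\<mu> \<eta>)) * (\<psi> * V (\<mu> \<eta>)))) (at \<eta>)"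
    by (rule DERIV_divide[OF mu_d2 DERIV_cmult[OF Vmu_d]]) (use psi_pos Vmu_pos[of \<eta>] in simp)
  have e: "(\<mu>'' \<eta> * (\<psi> * V (\<mu> \<eta>)) - \<mu>' \<eta> * (\<psi> * (V' (\<mu> \<eta>) * \<mu>' \<eta>))) / ((\<psi> * V (\<mu> \<eta>)) * (\<psi> * V (\<mu> \<eta>))) = w' \<eta>"
    by (simp add: w'_def power2_eq_square)
  show ?thesis using d unfolding e by (simp add: w_def[abs_def])
qed

lemma L1_d: "(L1 y has_real_derivative L2 y \<eta>) (at \<eta>)"
proof -
  have d1: "((\<lambda>\<eta>. y - \<mu> \<eta>) has_real_derivative 0 - \<mu>' \<eta>) (at \<eta>)"
    by (rule DERIV_diff[OF DERIV_const mu_d1])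
  have "((\<lambda>\<eta>. (y - \<mu> \<eta>) * w \<eta>) has_real_derivative (y - \<mu> \<eta>) * w' \<eta> + (0 - \<mu>' \<eta>) * w \<eta>) (at \<eta>)"
    by (rule DERIV_mult'[OF d1 w_d])
  thus ?thesis by (simp add: L1_def[abs_def] L2_def)
qed


lemma qll_chain:
  "(g has_real_derivative D) (at t) \<Longrightarrow> ((\<lambda>t. qll \<mu> V a \<psi> y (g t)) has_real_derivative L1 y (g t) * D) (at t)"
  using DERIV_chain'[OF _ qll_d1] by blast

lemma L1_chain:
  "(g has_real_derivative D) (at t) \<Longrightarrow> ((\<lambda>t. L1 y (g t)) has_real_derivative L2 y (g t) * D) (at t)"
  using DERIV_chain'[OF _ L1_d] by blast

lemma mn_eq: "mn \<mu> V a \<psi> s n y x \<gamma> b = (\<Sum>i<n. - qll \<mu> V a \<psi> (y i) (lin_pred (x i) \<gamma> b))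
   + (\<Sum>j\<in>\<gamma>. (b$j)\<^sup>2) / (2* s\<^sup>2) - ln ((2*pi* s\<^sup>2) powr (- real (card \<gamma>)/2))"
proof -
  have C: "(2*pi* s\<^sup>2) powr (- real (card \<gamma>)/2) > 0" using s_pos by simp
  have n: "real n * (1 / real n * (\<Sum>i<n. qll \<mu> V a \<psi> (y i) (lin_pred (x i) \<gamma> b))) = (\<Sum>i<n. qll \<mu> V a \<psi> (y i) (lin_pred (x i) \<gamma> b))"
    by (cases "n = 0") auto
  have l: "ln ((2*pi* s\<^sup>2) powr (- real (card \<gamma>)/2) * exp (- (\<Sum>j\<in>\<gamma>. (b $ j)\<^sup>2) / (2 * s\<^sup>2)))
     = ln ((2*pi* s\<^sup>2) powr (- real (card \<gamma>)/2)) - (\<Sum>j\<in>\<gamma>. (b $ j)\<^sup>2) / (2 * s\<^sup>2)"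
    by (subst ln_mult_pos[OF C exp_gt_zero]) simp
  show ?thesis
    unfolding mn_def Qn_def gauss_prior_def l
    using n by (simp add: sum_negf)
qed

definition Pk :: "nat \<Rightarrow> (nat \<Rightarrow> real) \<Rightarrow> (nat \<Rightarrow> real^'p::finite) \<Rightarrow> 'p set \<Rightarrow> 'p \<Rightarrow> real^'p \<Rightarrow> real" where
  "Pk n y x \<gamma> k c = (\<Sum>i<n. - (L1 (y i) (lin_pred (x i) \<gamma> c) * x i $ k)) + c $ k / s\<^sup>2"

lemma mn_line_d:
  assumes k: "k \<in> \<gamma>"
  shows "((\<lambda>t. mn \<mu> V a \<psi> s n y x \<gamma> (c + t *\<^sub>R axis k 1)) has_real_derivative Pk n y x \<gamma> k c) (at 0)"
proof -
  let ?C = "ln ((2*pi* s\<^sup>2) powr (- real (card \<gamma>)/2))"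
  have eq: "(\<lambda>t. mn \<mu> V a \<psi> s n y x \<gamma> (c + t *\<^sub>R axis k 1)) =
     (\<lambda>t. (\<Sum>i<n. - qll \<mu> V a \<psi> (y i) (lin_pred (x i) \<gamma> c + t * x i $ k))
       + (\<Sum>j\<in>\<gamma>. (c$j + t * (if j = k then 1 else 0))\<^sup>2) / (2* s\<^sup>2) - ?C)"
    by (rule ext, simp add: mn_eq lin_pred_line[OF k] vec_line)
  have d1: "((\<lambda>t. - qll \<mu> V a \<psi> (y i) (lin_pred (x i) \<gamma> c + t * x i $ k)) has_real_derivative
      - (L1 (y i) (lin_pred (x i) \<gamma> c) * x i $ k)) (at 0)" for i
  proof -
    have g: "((\<lambda>t. lin_pred (x i) \<gamma> c + t * x i $ k) has_real_derivative x i $ k) (at 0)"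
      by (auto intro!: derivative_eq_intros)
    show ?thesis using DERIV_minus[OF qll_chain[OF g]] by simp
  qed
  have d2: "((\<lambda>t. (c$j + t * (if j = k then 1 else 0))\<^sup>2) has_real_derivative
      2 * c$j * (if j = k then 1 else 0)) (at 0)" for j
    by (auto intro!: derivative_eq_intros)
  have "((\<lambda>t. (\<Sum>i<n. - qll \<mu> V a \<psi> (y i) (lin_pred (x i) \<gamma> c + t * x i $ k))
       + (\<Sum>j\<in>\<gamma>. (c$j + t * (if j = k then 1 else 0))\<^sup>2) / (2* s\<^sup>2) - ?C) has_real_derivative
     (\<Sum>i<n. - (L1 (y i) (lin_pred (x i) \<gamma> c) * x i $ k)) + (\<Sum>j\<in>\<gamma>. 2 * c$j * (if j = k then 1 else 0)) / (2* s\<^sup>2) - 0) (at 0)"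
    by (intro DERIV_diff DERIV_add DERIV_sum d1 DERIV_cdivide d2 DERIV_const)
  moreover have "(\<Sum>j\<in>\<gamma>. 2 * c$j * (if j = k then 1 else 0)) / (2* s\<^sup>2) = c $ k / s\<^sup>2"
    using k s_pos by (simp add: if_distrib cong: if_cong)
  ultimately show ?thesis unfolding eq Pk_def by simp
qed

lemma partial_mn: "k \<in> \<gamma> \<Longrightarrow> partial_deriv (mn \<mu> V a \<psi> s n y x \<gamma>) k = Pk n y x \<gamma> k"
  unfolding partial_deriv_def by (rule ext, rule DERIV_imp_deriv, rule mn_line_d)

lemma hessian_mn:
  assumes j: "j \<in> \<gamma>" and k: "k \<in> \<gamma>"
  shows "hessian_entry (mn \<mu> V a \<psi> s n y x \<gamma>) j k b =
    (\<Sum>i<n. - (L2 (y i) (lin_pred (x i) \<gamma> b) * x i $ j * x i $ k)) + (if j = k then 1 / s\<^sup>2 else 0)"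
proof -
  have eq: "(\<lambda>t. Pk n y x \<gamma> k (b + t *\<^sub>R axis j 1)) =
     (\<lambda>t. (\<Sum>i<n. - (L1 (y i) (lin_pred (x i) \<gamma> b + t * x i $ j) * x i $ k)) + (b$k + t * (if k = j then 1 else 0)) / s\<^sup>2)"
    by (rule ext, simp add: Pk_def lin_pred_line[OF j] vec_line)
  have d1: "((\<lambda>t. - (L1 (y i) (lin_pred (x i) \<gamma> b + t * x i $ j) * x i $ k)) has_real_derivative
      - (L2 (y i) (lin_pred (x i) \<gamma> b) * x i $ j * x i $ k)) (at 0)" for i
  proof -
    have g: "((\<lambda>t. lin_pred (x i) \<gamma> b + t * x i $ j) has_real_derivative x i $ j) (at 0)"
      by (auto intro!: derivative_eq_intros)
    show ?thesis using DERIV_minus[OF DERIV_cmult_right[OF L1_chain[OF g, of "y i"], where c="x i $ k"]] by simp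
  qed
  have d20: "((\<lambda>t. b$k + t * (if k = j then 1 else 0)) has_real_derivative (if k = j then 1 else 0)) (at 0)"
    by (auto intro!: derivative_eq_intros)
  have d2: "((\<lambda>t. (b$k + t * (if k = j then 1 else 0)) / s\<^sup>2) has_real_derivative (if k = j then 1 else 0) / s\<^sup>2) (at 0)"
    by (rule DERIV_cdivide[OF d20])
  have "((\<lambda>t. Pk n y x \<gamma> k (b + t *\<^sub>R axis j 1)) has_real_derivative
    (\<Sum>i<n. - (L2 (y i) (lin_pred (x i) \<gamma> b) * x i $ j * x i $ k)) + (if k = j then 1 else 0) / s\<^sup>2) (at 0)"
    unfolding eq by (intro DERIV_add DERIV_sum d1 d2)
  moreover have "(if k = j then 1 else 0) / s\<^sup>2 = (if j = k then 1 / s\<^sup>2 else (0::real))" by auto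
  ultimately show ?thesis unfolding hessian_entry_def partial_mn[OF k] partial_deriv_def
    by (intro DERIV_imp_deriv) simp
qed


lemma L2_cond:
  assumes cond: "V' (\<mu> \<eta>) / V (\<mu> \<eta>) * (\<mu>' \<eta>)\<^sup>2 - \<mu>'' \<eta> = 0"
  shows "L2 y \<eta> = - (\<mu>' \<eta>)\<^sup>2 / (\<psi> * V (\<mu> \<eta>))"
proof -
  have V: "V (\<mu> \<eta>) > 0" by (rule Vmu_pos)
  from cond V have e: "V' (\<mu> \<eta>) * (\<mu>' \<eta>)\<^sup>2 = \<mu>'' \<eta> * V (\<mu> \<eta>)"
    by (simp add: field_simps)
  have "\<mu>'' \<eta> * (\<psi> * V (\<mu> \<eta>)) - \<mu>' \<eta> * (\<psi> * (V' (\<mu> \<eta>) * \<mu>' \<eta>))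
      = \<psi> * (\<mu>'' \<eta> * V (\<mu> \<eta>) - V' (\<mu> \<eta>) * (\<mu>' \<eta>)\<^sup>2)"
    by (simp add: algebra_simps power2_eq_square)
  also have "\<dots> = 0" using e by simp
  finally have "w' \<eta> = 0" unfolding w'_def by simp
  thus ?thesis by (simp add: L2_def w_def power2_eq_square)
qed

lemma qll_convex:
  assumes cond: "\<And>\<eta>. \<eta> \<in> R \<Longrightarrow> V' (\<mu> \<eta>) / V (\<mu> \<eta>) * (\<mu>' \<eta>)\<^sup>2 - \<mu>'' \<eta> = 0"
    and R: "convex R"
  shows "convex_on R (\<lambda>\<eta>. - qll \<mu> V a \<psi> y \<eta>)"
proof (rule convex_on_realI)
  show "connected R" using R by (rule convex_connected)
  show "((\<lambda>\<eta>. - qll \<mu> V a \<psi> y \<eta>) has_real_derivative - L1 y \<eta>) (at \<eta>)" for \<eta>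
    by (rule DERIV_minus[OF qll_d1])
  fix p q assume p: "p \<in> R" and q: "q \<in> R" and pq: "p \<le> q"
  show "- L1 y p \<le> - L1 y q"
  proof (rule DERIV_nonneg_imp_increasing_open[OF pq])
    fix z assume z: "p < z" "z < q"
    have zR: "z \<in> R" using R p q z unfolding is_interval_convex_1[symmetric] is_interval_1
      by (meson less_imp_le)
    have "- L2 y z = (\<mu>' z)\<^sup>2 / (\<psi> * V (\<mu> z))" using L2_cond[OF cond[OF zR]] by simp
    also have "\<dots> \<ge> 0" using psi_pos Vmu_pos[of z] by simp
    finally show "\<exists>d. ((\<lambda>\<eta>. - L1 y \<eta>) has_real_derivative d) (at z) \<and> d \<ge> 0"
      using DERIV_minus[OF L1_d] by blast
  next
    show "continuous_on {p..q} (\<lambda>\<eta>. - L1 y \<eta>)"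
      by (rule continuous_at_imp_continuous_on) (use DERIV_isCont[OF DERIV_minus[OF L1_d]] in blast)
  qed
qed

end

lemma convex_on_sum_fun:
  assumes "finite I" "convex S" "\<And>i. i \<in> I \<Longrightarrow> convex_on S (f i)"
  shows "convex_on S (\<lambda>x. \<Sum>i\<in>I. f i x)"
  using assms by (induction I rule: finite_induct) (auto simp: convex_on_const intro!: convex_on_add)

lemma convex_on_compose_linear:
  assumes L: "linear L" and S: "convex S" and h: "convex_on (L ` S) h"
  shows "convex_on S (\<lambda>x. h (L x))"
  unfolding convex_on_def
proof (intro conjI ballI allI impI S)
  fix x y and u v :: real
  assume x: "x \<in> S" and y: "y \<in> S" and uv: "0 \<le> u" "0 \<le> v" "u + v = 1"
  have "L (u *\<^sub>R x + v *\<^sub>R y) = u *\<^sub>R L x + v *\<^sub>R L y"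
    using L by (simp add: linear_add linear_scale)
  moreover have "h (u *\<^sub>R L x + v *\<^sub>R L y) \<le> u * h (L x) + v * h (L y)"
    using h x y uv unfolding convex_on_def by auto
  ultimately show "h (L (u *\<^sub>R x + v *\<^sub>R y)) \<le> u * h (L x) + v * h (L y)" by simp
qed

lemma linear_lin_pred: "linear (lin_pred xi \<gamma>)"
  by (rule linearI) (simp_all add: lin_pred_def sum.distrib sum_distrib_left algebra_simps)

lemma linear_nth: "linear (\<lambda>b::real^'p::finite. b $ j)"
  by (rule linearI) simp_all

lemma convex_model_space: "convex (model_space \<gamma>)"
  unfolding convex_def model_space_def by auto

lemma convex_sq:
  assumes s: "s > 0" shows "convex_on UNIV (\<lambda>t::real. t\<^sup>2 / (2 * s\<^sup>2))"
proof (rule convex_on_realI[where f'="\<lambda>t. t / s\<^sup>2"])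
  show "connected (UNIV::real set)" by simp
  show "((\<lambda>t::real. t\<^sup>2 / (2 * s\<^sup>2)) has_real_derivative t / s\<^sup>2) (at t)" for t
    using s by (auto intro!: derivative_eq_intros simp: power2_eq_square)
  show "p / s\<^sup>2 \<le> q / s\<^sup>2" if "p \<le> q" for p q
    using that by (simp add: divide_right_mono)
qed

lemma pos_def_A:
  fixes x :: "nat \<Rightarrow> real^'p::finite"
  assumes psi: "\<psi> > 0" and s: "s > 0" and d: "\<And>i. d i \<ge> 0"
  shows "pos_def_on \<gamma> (\<lambda>j k. (1 / \<psi>) * (\<Sum>i<n. x i $ j * d i * x i $ k) + (if j = k then 1 / s\<^sup>2 else 0))"
  unfolding pos_def_on_def
proof (intro allI impI)
  fix c :: "'p \<Rightarrow> real" assume ex: "\<exists>j\<in>\<gamma>. c j \<noteq> 0"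
  have e1: "(\<Sum>j\<in>\<gamma>. \<Sum>k\<in>\<gamma>. c j * ((1 / \<psi>) * (\<Sum>i<n. x i $ j * d i * x i $ k)) * c k)
     = (\<Sum>i<n. (d i / \<psi>) * (\<Sum>j\<in>\<gamma>. c j * x i $ j)\<^sup>2)"
  proof -
    have "(\<Sum>j\<in>\<gamma>. \<Sum>k\<in>\<gamma>. c j * ((1 / \<psi>) * (\<Sum>i<n. x i $ j * d i * x i $ k)) * c k)
       = (\<Sum>j\<in>\<gamma>. \<Sum>k\<in>\<gamma>. \<Sum>i<n. (d i / \<psi>) * (c j * x i $ j) * (c k * x i $ k))"
      by (simp add: sum_distrib_left sum_distrib_right algebra_simps)
    also have "\<dots> = (\<Sum>j\<in>\<gamma>. \<Sum>i<n. \<Sum>k\<in>\<gamma>. (d i / \<psi>) * (c j * x i $ j) * (c k * x i $ k))"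
      by (simp add: sum.swap[where A=\<gamma> and B="{..<n}"])
    also have "\<dots> = (\<Sum>i<n. \<Sum>j\<in>\<gamma>. \<Sum>k\<in>\<gamma>. (d i / \<psi>) * (c j * x i $ j) * (c k * x i $ k))"
      by (rule sum.swap)
    also have "\<dots> = (\<Sum>i<n. (d i / \<psi>) * (\<Sum>j\<in>\<gamma>. c j * x i $ j)\<^sup>2)"
      by (simp add: power2_eq_square sum_distrib_left sum_distrib_right algebra_simps)
    finally show ?thesis .
  qed
  have e2: "(\<Sum>j\<in>\<gamma>. \<Sum>k\<in>\<gamma>. c j * (if j = k then 1 / s\<^sup>2 else 0) * c k) = (\<Sum>j\<in>\<gamma>. (c j)\<^sup>2 / s\<^sup>2)"
  proof (rule sum.cong[OF refl])
    fix j assume j: "j \<in> \<gamma>"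
    have "(\<Sum>k\<in>\<gamma>. c j * (if j = k then 1 / s\<^sup>2 else 0) * c k) = (\<Sum>k\<in>\<gamma>. if j = k then c j * c k / s\<^sup>2 else 0)"
      by (rule sum.cong) auto
    also have "\<dots> = (c j)\<^sup>2 / s\<^sup>2" using j by (simp add: sum.delta power2_eq_square)
    finally show "(\<Sum>k\<in>\<gamma>. c j * (if j = k then 1 / s\<^sup>2 else 0) * c k) = (c j)\<^sup>2 / s\<^sup>2" .
  qed
  have "(\<Sum>j\<in>\<gamma>. \<Sum>k\<in>\<gamma>. c j * ((1 / \<psi>) * (\<Sum>i<n. x i $ j * d i * x i $ k) + (if j = k then 1 / s\<^sup>2 else 0)) * c k)
     = (\<Sum>i<n. (d i / \<psi>) * (\<Sum>j\<in>\<gamma>. c j * x i $ j)\<^sup>2) + (\<Sum>j\<in>\<gamma>. (c j)\<^sup>2 / s\<^sup>2)"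
    unfolding e1[symmetric] e2[symmetric] by (simp add: algebra_simps sum.distrib)
  moreover have "(\<Sum>i<n. (d i / \<psi>) * (\<Sum>j\<in>\<gamma>. c j * x i $ j)\<^sup>2) \<ge> 0"
    using psi d by (intro sum_nonneg mult_nonneg_nonneg) auto
  moreover have "(\<Sum>j\<in>\<gamma>. (c j)\<^sup>2 / s\<^sup>2) > 0"
  proof -
    obtain j where j: "j \<in> \<gamma>" "c j \<noteq> 0" using ex by blast
    have "(c j)\<^sup>2 / s\<^sup>2 \<le> (\<Sum>j\<in>\<gamma>. (c j)\<^sup>2 / s\<^sup>2)"
      by (rule member_le_sum) (use j in auto)
    moreover have "(c j)\<^sup>2 / s\<^sup>2 > 0" using j s by simp
    ultimately show ?thesis by linarith
  qed
  ultimately show "(\<Sum>j\<in>\<gamma>. \<Sum>k\<in>\<gamma>. c j * ((1 / \<psi>) * (\<Sum>i<n. x i $ j * d i * x i $ k) + (if j = k then 1 / s\<^sup>2 else 0)) * c k) > 0"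
    by linarith
qed

theorem proposition3:
  fixes \<mu> \<mu>' \<mu>'' V V' :: "real \<Rightarrow> real"
    and Y :: "real set" and a \<psi> s :: real
    and n :: nat and x :: "nat \<Rightarrow> real^'p::finite" and \<gamma> :: "'p set"
  assumes Y_interval: "is_interval Y" and a_in: "a \<in> Y"
    and mu_range: "\<And>\<eta>. \<mu> \<eta> \<in> Y"
    and mu_d1: "\<And>\<eta>. (\<mu> has_real_derivative \<mu>' \<eta>) (at \<eta>)"
    and mu_d2: "\<And>\<eta>. (\<mu>' has_real_derivative \<mu>'' \<eta>) (at \<eta>)"
    and V_pos: "\<And>t. t \<in> Y \<Longrightarrow> V t > 0"
    and V_d: "\<And>t. t \<in> Y \<Longrightarrow> (V has_real_derivative V' t) (at t within Y)"
    and psi_pos: "\<psi> > 0" and s_pos: "s > 0"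
    and rank: "full_col_rank n x \<gamma>"
  shows
    "(\<forall>y. (\<forall>i<n. y i \<in> Y) \<longrightarrow>
        (\<forall>i<n. \<forall>b\<in>model_space \<gamma>.
           V' (\<mu> (lin_pred (x i) \<gamma> b)) / V (\<mu> (lin_pred (x i) \<gamma> b))
             * (\<mu>' (lin_pred (x i) \<gamma> b))\<^sup>2 - \<mu>'' (lin_pred (x i) \<gamma> b) = 0) \<longrightarrow>
        convex_on (model_space \<gamma>) (mn \<mu> V a \<psi> s n y x \<gamma>))
     \<and>
     (\<forall>(M :: 'w measure) (yr :: 'w \<Rightarrow> nat \<Rightarrow> real) (\<beta>s :: real^'p).
        prob_space M \<longrightarrow>
        (\<forall>\<omega>\<in>space M. \<forall>i<n. yr \<omega> i \<in> Y) \<longrightarrow>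
        (\<forall>i<n. integrable M (\<lambda>\<omega>. yr \<omega> i)
               \<and> (\<integral>\<omega>. yr \<omega> i \<partial>M) = \<mu> (\<Sum>j\<in>UNIV. x i $ j * \<beta>s $ j)) \<longrightarrow>
        {j. \<beta>s $ j \<noteq> 0} \<subseteq> \<gamma> \<longrightarrow>
        (let d = (\<lambda>i. (\<mu>' (lin_pred (x i) \<gamma> (restr \<gamma> \<beta>s)))\<^sup>2
                        / V (\<mu> (lin_pred (x i) \<gamma> (restr \<gamma> \<beta>s))));
             A = (\<lambda>j k. (1 / \<psi>) * (\<Sum>i<n. x i $ j * d i * x i $ k)
                         + (if j = k then 1 / s\<^sup>2 else 0))
         in (\<forall>j\<in>\<gamma>. \<forall>k\<in>\<gamma>.
               integrable M (\<lambda>\<omega>. hessian_entry (mn \<mu> V a \<psi> s n (yr \<omega>) x \<gamma>) j k (restr \<gamma> \<beta>s))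
             \<and> (\<integral>\<omega>. hessian_entry (mn \<mu> V a \<psi> s n (yr \<omega>) x \<gamma>) j k (restr \<gamma> \<beta>s) \<partial>M) = A j k)
            \<and> pos_def_on \<gamma> A))"
proof -
  interpret qsetup \<mu> \<mu>' \<mu>'' V V' Y a \<psi> s
    by unfold_locales (fact Y_interval a_in mu_range mu_d1 mu_d2 V_pos V_d psi_pos s_pos)+
  have part1: "\<forall>y. (\<forall>i<n. y i \<in> Y) \<longrightarrow>
        (\<forall>i<n. \<forall>b\<in>model_space \<gamma>.
           V' (\<mu> (lin_pred (x i) \<gamma> b)) / V (\<mu> (lin_pred (x i) \<gamma> b))
             * (\<mu>' (lin_pred (x i) \<gamma> b))\<^sup>2 - \<mu>'' (lin_pred (x i) \<gamma> b) = 0) \<longrightarrow>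
        convex_on (model_space \<gamma>) (mn \<mu> V a \<psi> s n y x \<gamma>)"
  proof (intro allI impI)
    fix y :: "nat \<Rightarrow> real"
    assume cond: "\<forall>i<n. \<forall>b\<in>model_space \<gamma>.
           V' (\<mu> (lin_pred (x i) \<gamma> b)) / V (\<mu> (lin_pred (x i) \<gamma> b))
             * (\<mu>' (lin_pred (x i) \<gamma> b))\<^sup>2 - \<mu>'' (lin_pred (x i) \<gamma> b) = 0"
    let ?S = "model_space \<gamma>"
    let ?C = "ln ((2*pi* s\<^sup>2) powr (- real (card \<gamma>)/2))"
    have eq: "mn \<mu> V a \<psi> s n y x \<gamma> = (\<lambda>b. (\<Sum>i<n. - qll \<mu> V a \<psi> (y i) (lin_pred (x i) \<gamma> b))
        + (\<Sum>j\<in>\<gamma>. (b$j)\<^sup>2 / (2 * s\<^sup>2)) + (- ?C))"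
      by (rule ext) (simp add: mn_eq sum_divide_distrib)
    have c1: "convex_on ?S (\<lambda>b. \<Sum>i<n. - qll \<mu> V a \<psi> (y i) (lin_pred (x i) \<gamma> b))"
    proof (rule convex_on_sum_fun[OF _ convex_model_space, where f="\<lambda>i b. - qll \<mu> V a \<psi> (y i) (lin_pred (x i) \<gamma> b)"])
      fix i assume i: "i \<in> {..<n}"
      show "convex_on ?S (\<lambda>b. - qll \<mu> V a \<psi> (y i) (lin_pred (x i) \<gamma> b))"
      proof (rule convex_on_compose_linear[OF linear_lin_pred convex_model_space, where h = "\<lambda>\<eta>. - qll \<mu> V a \<psi> (y i) \<eta>"])
        show "convex_on (lin_pred (x i) \<gamma> ` ?S) (\<lambda>\<eta>. - qll \<mu> V a \<psi> (y i) \<eta>)"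
          by (rule qll_convex) (use cond i convex_linear_image[OF linear_lin_pred convex_model_space] in auto)
      qed
    qed simp
    have c2: "convex_on ?S (\<lambda>b. \<Sum>j\<in>\<gamma>. (b$j)\<^sup>2 / (2 * s\<^sup>2))"
    proof (rule convex_on_sum_fun[OF _ convex_model_space, where f="\<lambda>j b. (b$j)\<^sup>2 / (2 * s\<^sup>2)"])
      fix j assume j: "j \<in> \<gamma>"
      show "convex_on ?S (\<lambda>b. (b$j)\<^sup>2 / (2 * s\<^sup>2))"
        by (rule convex_on_compose_linear[OF linear_nth convex_model_space, where h = "\<lambda>t. t\<^sup>2 / (2 * s\<^sup>2)"])
           (rule convex_on_subset[OF convex_sq[OF s_pos]],
            auto intro: convex_linear_image[OF linear_nth convex_model_space])
    qed simp
    have c3: "convex_on ?S (\<lambda>b. - ?C)" by (simp add: convex_on_const convex_model_space)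
    show "convex_on ?S (mn \<mu> V a \<psi> s n y x \<gamma>)"
      unfolding eq by (intro convex_on_add c1 c2 c3)
  qed
  have part2: "\<forall>(M :: 'w measure) (yr :: 'w \<Rightarrow> nat \<Rightarrow> real) (\<beta>s :: real^'p).
        prob_space M \<longrightarrow>
        (\<forall>\<omega>\<in>space M. \<forall>i<n. yr \<omega> i \<in> Y) \<longrightarrow>
        (\<forall>i<n. integrable M (\<lambda>\<omega>. yr \<omega> i)
               \<and> (\<integral>\<omega>. yr \<omega> i \<partial>M) = \<mu> (\<Sum>j\<in>UNIV. x i $ j * \<beta>s $ j)) \<longrightarrow>
        {j. \<beta>s $ j \<noteq> 0} \<subseteq> \<gamma> \<longrightarrow>
        (let d = (\<lambda>i. (\<mu>' (lin_pred (x i) \<gamma> (restr \<gamma> \<beta>s)))\<^sup>2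
                        / V (\<mu> (lin_pred (x i) \<gamma> (restr \<gamma> \<beta>s))));
             A = (\<lambda>j k. (1 / \<psi>) * (\<Sum>i<n. x i $ j * d i * x i $ k)
                         + (if j = k then 1 / s\<^sup>2 else 0))
         in (\<forall>j\<in>\<gamma>. \<forall>k\<in>\<gamma>.
               integrable M (\<lambda>\<omega>. hessian_entry (mn \<mu> V a \<psi> s n (yr \<omega>) x \<gamma>) j k (restr \<gamma> \<beta>s))
             \<and> (\<integral>\<omega>. hessian_entry (mn \<mu> V a \<psi> s n (yr \<omega>) x \<gamma>) j k (restr \<gamma> \<beta>s) \<partial>M) = A j k)
            \<and> pos_def_on \<gamma> A)"
  proof (intro allI impI)
    fix M :: "'w measure" and yr :: "'w \<Rightarrow> nat \<Rightarrow> real" and \<beta>s :: "real^'p"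
    assume P: "prob_space M"
      and E: "\<forall>i<n. integrable M (\<lambda>\<omega>. yr \<omega> i) \<and> (\<integral>\<omega>. yr \<omega> i \<partial>M) = \<mu> (\<Sum>j\<in>UNIV. x i $ j * \<beta>s $ j)"
      and supp: "{j. \<beta>s $ j \<noteq> 0} \<subseteq> \<gamma>"
    interpret P: prob_space M by (rule P)
    define \<eta> where "\<eta> i = lin_pred (x i) \<gamma> (restr \<gamma> \<beta>s)" for i
    have \<eta>eq: "(\<Sum>j\<in>UNIV. x i $ j * \<beta>s $ j) = \<eta> i" for i
    proof -
      have "(\<Sum>j\<in>UNIV. x i $ j * \<beta>s $ j) = (\<Sum>j\<in>\<gamma>. x i $ j * \<beta>s $ j)"
        by (rule sum.mono_neutral_right) (use supp in auto)
      also have "\<dots> = \<eta> i" unfolding \<eta>_def lin_pred_def restr_def by (rule sum.cong) auto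
      finally show ?thesis .
    qed
    have Ey: "integrable M (\<lambda>\<omega>. yr \<omega> i)" "(\<integral>\<omega>. yr \<omega> i \<partial>M) = \<mu> (\<eta> i)" if "i < n" for i
      using E that \<eta>eq by auto
    define d where "d i = (\<mu>' (\<eta> i))\<^sup>2 / V (\<mu> (\<eta> i))" for i
    define A where "A j k = (1 / \<psi>) * (\<Sum>i<n. x i $ j * d i * x i $ k) + (if j = k then 1 / s\<^sup>2 else 0)" for j k
    have main: "(\<forall>j\<in>\<gamma>. \<forall>k\<in>\<gamma>.
               integrable M (\<lambda>\<omega>. hessian_entry (mn \<mu> V a \<psi> s n (yr \<omega>) x \<gamma>) j k (restr \<gamma> \<beta>s))
             \<and> (\<integral>\<omega>. hessian_entry (mn \<mu> V a \<psi> s n (yr \<omega>) x \<gamma>) j k (restr \<gamma> \<beta>s) \<partial>M) = A j k)"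
    proof (intro ballI)
      fix j k assume j: "j \<in> \<gamma>" and k: "k \<in> \<gamma>"
      define e where "e i = w' (\<eta> i) * x i $ j * x i $ k" for i
      define g where "g i = \<mu>' (\<eta> i) * w (\<eta> i) * x i $ j * x i $ k" for i
      have H: "(\<lambda>\<omega>. hessian_entry (mn \<mu> V a \<psi> s n (yr \<omega>) x \<gamma>) j k (restr \<gamma> \<beta>s)) =
          (\<lambda>\<omega>. (if j = k then 1 / s\<^sup>2 else 0) + (\<Sum>i<n. g i + (\<mu> (\<eta> i) - yr \<omega> i) * e i))"
      proof (rule ext)
        fix \<omega>
        have "(\<Sum>i<n. - (L2 (yr \<omega> i) (lin_pred (x i) \<gamma> (restr \<gamma> \<beta>s)) * x i $ j * x i $ k))
            = (\<Sum>i<n. g i + (\<mu> (\<eta> i) - yr \<omega> i) * e i)"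
          by (rule sum.cong) (simp_all add: L2_def g_def e_def \<eta>_def algebra_simps)
        thus "hessian_entry (mn \<mu> V a \<psi> s n (yr \<omega>) x \<gamma>) j k (restr \<gamma> \<beta>s) =
          (if j = k then 1 / s\<^sup>2 else 0) + (\<Sum>i<n. g i + (\<mu> (\<eta> i) - yr \<omega> i) * e i)"
          unfolding hessian_mn[OF j k] by simp
      qed
      have Ii: "integrable M (\<lambda>\<omega>. g i + (\<mu> (\<eta> i) - yr \<omega> i) * e i)" if "i \<in> {..<n}" for i
        using Ey(1)[of i] that by auto
      have Int_i: "(\<integral>\<omega>. g i + (\<mu> (\<eta> i) - yr \<omega> i) * e i \<partial>M) = g i" if "i \<in> {..<n}" for i
        using Ey[of i] that P.prob_space by simp
      have I: "integrable M (\<lambda>\<omega>. (if j = k then 1 / s\<^sup>2 else 0) + (\<Sum>i<n. g i + (\<mu> (\<eta> i) - yr \<omega> i) * e i))"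
        using Ii by (intro Bochner_Integration.integrable_add integrable_sum) auto
      have "(\<integral>\<omega>. (if j = k then 1 / s\<^sup>2 else 0) + (\<Sum>i<n. g i + (\<mu> (\<eta> i) - yr \<omega> i) * e i) \<partial>M)
          = (if j = k then 1 / s\<^sup>2 else 0) + (\<Sum>i<n. g i)"
      proof -
        have IS: "integrable M (\<lambda>\<omega>. \<Sum>i<n. g i + (\<mu> (\<eta> i) - yr \<omega> i) * e i)"
          by (rule Bochner_Integration.integrable_sum) (rule Ii)
        have "(\<integral>\<omega>. (if j = k then 1 / s\<^sup>2 else 0) + (\<Sum>i<n. g i + (\<mu> (\<eta> i) - yr \<omega> i) * e i) \<partial>M)
           = (\<integral>\<omega>. (if j = k then 1 / s\<^sup>2 else 0) \<partial>M) + (\<integral>\<omega>. (\<Sum>i<n. g i + (\<mu> (\<eta> i) - yr \<omega> i) * e i) \<partial>M)"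
          by (rule Bochner_Integration.integral_add[OF _ IS]) simp
        also have "(\<integral>\<omega>. (if j = k then 1 / s\<^sup>2 else 0) \<partial>M) = (if j = k then 1 / s\<^sup>2 else 0)"
          using P.prob_space by simp
        also have "(\<integral>\<omega>. (\<Sum>i<n. g i + (\<mu> (\<eta> i) - yr \<omega> i) * e i) \<partial>M) = (\<Sum>i<n. g i)"
          by (subst Bochner_Integration.integral_sum) (use Ii Int_i in auto)
        finally show ?thesis .
      qed
      also have "\<dots> = A j k"
      proof -
        have "(\<Sum>i<n. g i) = (1 / \<psi>) * (\<Sum>i<n. x i $ j * d i * x i $ k)"
          unfolding sum_distrib_left
          by (rule sum.cong) (simp_all add: g_def d_def w_def power2_eq_square)
        thus ?thesis by (simp add: A_def)
      qed
      finally show "integrable M (\<lambda>\<omega>. hessian_entry (mn \<mu> V a \<psi> s n (yr \<omega>) x \<gamma>) j k (restr \<gamma> \<beta>s))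
             \<and> (\<integral>\<omega>. hessian_entry (mn \<mu> V a \<psi> s n (yr \<omega>) x \<gamma>) j k (restr \<gamma> \<beta>s) \<partial>M) = A j k"
        unfolding H using I by simp
    qed
    have pd: "pos_def_on \<gamma> A"
      unfolding A_def[abs_def]
      by (rule pos_def_A[OF psi_pos s_pos]) (simp add: d_def Vmu_pos less_imp_le)
    show "let d = (\<lambda>i. (\<mu>' (lin_pred (x i) \<gamma> (restr \<gamma> \<beta>s)))\<^sup>2
                        / V (\<mu> (lin_pred (x i) \<gamma> (restr \<gamma> \<beta>s))));
             A = (\<lambda>j k. (1 / \<psi>) * (\<Sum>i<n. x i $ j * d i * x i $ k)
                         + (if j = k then 1 / s\<^sup>2 else 0))
         in (\<forall>j\<in>\<gamma>. \<forall>k\<in>\<gamma>.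
               integrable M (\<lambda>\<omega>. hessian_entry (mn \<mu> V a \<psi> s n (yr \<omega>) x \<gamma>) j k (restr \<gamma> \<beta>s))
             \<and> (\<integral>\<omega>. hessian_entry (mn \<mu> V a \<psi> s n (yr \<omega>) x \<gamma>) j k (restr \<gamma> \<beta>s) \<partial>M) = A j k)
            \<and> pos_def_on \<gamma> A"
      using main pd unfolding Let_def A_def[abs_def] d_def[abs_def] \<eta>_def by simp
  qed
  show ?thesis using part1 part2 by blast
qed

end
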